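(* Let $n\ge1$, let $G^\star=([n],E^\star)$ be a directed graph (directed cycles allowed), let $S_1=\operatorname{argmin}_{(\mathcal P,\pi)\in\mathcal S}|E^{(1)}_{(\mathcal P,\pi)}|$ and $S_2=\operatorname{argmin}_{(\mathcal P,\pi)\in S_1}|E^{(2)}_{(\mathcal P,\pi)}|$. Then (i) the partially ordered partition associated with $G^\star$ belongs to $S_2$, and (ii) for every $(\mathcal P,\pi)\in S_2$, $E^{(2)}_{(\mathcal P,\pi)}$ equals the set of unshielded conductors in $G^\star$.
   Context: $[n]=\{1,\dots,n\}$. The observed distribution is Markov and faithful to $G^\star$; for distinct $a,b$ and $Z\subseteq[n]\setminus\{a,b\}$, $a\perp\!\!\!\perp b\mid Z$ means $a$ and $b$ are $d$-separated given $Z$ in $G^\star$, and $a\not\perp\!\!\!\perp b\mid Z$ is its negation. In a directed graph, $a$ is an ancestor of $b$ if $a=b$ or there is a directed path from $a$ to $b$. Distinct $a,b$ are $p$-adjacent in a directed graph $G$ if there is an edge between them, or they have a common child which is an ancestor of $a$ or of $b$. A triple $(a,b,c)$ such that $a,c$ are not $p$-adjacent while $a,b$ and $c,b$ are $p$-adjacent is an unshielded conductor if $b$ is an ancestor of $a$ or of $c$, and an unshielded non-conductor otherwise. $\mathcal S$ is the set of pairs $(\mathcal P,\pi)$ with $\mathcal P$ a partition of $[n]$ and $\pi$ a partial order on $\mathcal P$; $C_1\le_\pi C_2$ iff $(C_1,C_2)\in\pi$; $C_{i,\mathcal P}$ is the block containing $i$; $C\le_\pi\max\{C_1,\dots,C_t\}$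 means $C\le_\pi C_i$ for some $i$. The strongly connected components of a directed graph $G$ are the classes of $i\sim j$ iff $i=j$ or there are directed paths $i\to j$ and $j\to i$; on them $C_1\le_G C_2$ iff $C_1=C_2$ or there is a directed path from a vertex of $C_1$ to a vertex of $C_2$. The partially ordered partition associated with $G$ is (its set of strongly connected components, $\le_G$). $E^{(1)}_{(\mathcal P,\pi)}=\{(a,b)\in[n]^2: a\ne b,\ a\not\perp\!\!\!\perp b\mid\bigcup\{C\in\mathcal P: C\le_\pi\max\{C_{a,\mathcal P},C_{b,\mathcal P}\}\}\setminus\{a,b\}\}$. $E^{(2)}_{(\mathcal P,\pi)}$ is the set of $(a,b,c)\in[n]^3$ with $a,b,c$ distinct, $(a,b),(c,b)\in E^{(1)}_{(\mathcal P,\pi)}$, $(a,c)\notin E^{(1)}_{(\mathcal P,\pi)}$ and $C_{b,\mathcal P}\le_\pi\max\{C_{a,\mathcal P},C_{c,\mathcal P}\}$. *)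

theory Defs
  imports Main "HOL-Library.Disjoint_Sets"
begin

(* Vertex set [n] = {1..n}; a directed graph is an edge set E \<subseteq> [n] \<times> [n]. *)

definition ancestor :: "(nat \<times> nat) set \<Rightarrow> nat \<Rightarrow> nat \<Rightarrow> bool" where
  "ancestor E a b \<longleftrightarrow> (a, b) \<in> E\<^sup>*"

(* A path between a and b: distinct vertices vs, with ds!i giving the orientation of the
   edge used between vs!i and vs!(i+1) (True: vs!i \<rightarrow> vs!(i+1), False: vs!(i+1) \<rightarrow> vs!i).
   It is d-connecting given Z if every collider is an ancestor of some element of Z and
   every non-collider (interior vertex) is not in Z. *)
definition d_connecting_path ::
  "(nat \<times> nat) set \<Rightarrow> nat \<Rightarrow> nat \<Rightarrow> nat set \<Rightarrow> nat list \<Rightarrow> bool list \<Rightarrow> bool" where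
  "d_connecting_path E a b Z vs ds \<longleftrightarrow>
     distinct vs \<and> 2 \<le> length vs \<and> hd vs = a \<and> last vs = b \<and>
     length ds = length vs - 1 \<and>
     (\<forall>i < length ds. if ds ! i then (vs ! i, vs ! Suc i) \<in> E else (vs ! Suc i, vs ! i) \<in> E) \<and>
     (\<forall>i. 0 < i \<and> i < length ds \<longrightarrow>
        (if ds ! (i - 1) \<and> \<not> ds ! i
         then (\<exists>z\<in>Z. ancestor E (vs ! i) z)
         else vs ! i \<notin> Z))"

definition d_separated :: "(nat \<times> nat) set \<Rightarrow> nat \<Rightarrow> nat \<Rightarrow> nat set \<Rightarrow> bool" where
  "d_separated E a b Z \<longleftrightarrow> \<not> (\<exists>vs ds. d_connecting_path E a b Z vs ds)"

definition p_adjacent :: "(nat \<times> nat) set \<Rightarrow> nat \<Rightarrow> nat \<Rightarrow> bool" where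
  "p_adjacent E a b \<longleftrightarrow> a \<noteq> b \<and>
     ((a, b) \<in> E \<or> (b, a) \<in> E \<or>
      (\<exists>c. (a, c) \<in> E \<and> (b, c) \<in> E \<and> (ancestor E c a \<or> ancestor E c b)))"

definition unshielded_conductors :: "nat \<Rightarrow> (nat \<times> nat) set \<Rightarrow> (nat \<times> nat \<times> nat) set" where
  "unshielded_conductors n E = {(a, b, c). a \<in> {1..n} \<and> b \<in> {1..n} \<and> c \<in> {1..n} \<and>
     distinct [a, b, c] \<and> \<not> p_adjacent E a c \<and> p_adjacent E a b \<and> p_adjacent E c b \<and>
     (ancestor E b a \<or> ancestor E b c)}"

definition POP :: "nat \<Rightarrow> (nat set set \<times> (nat set \<times> nat set) set) set" where
  "POP n = {(P, \<pi>). partition_on {1..n} P \<and> partial_order_on P \<pi>}"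

definition blk :: "nat set set \<Rightarrow> nat \<Rightarrow> nat set" where
  "blk P i = (THE C. C \<in> P \<and> i \<in> C)"

definition E1 :: "nat \<Rightarrow> (nat \<times> nat) set \<Rightarrow> nat set set \<times> (nat set \<times> nat set) set \<Rightarrow> (nat \<times> nat) set" where
  "E1 n E s = (case s of (P, \<pi>) \<Rightarrow>
     {(a, b). a \<in> {1..n} \<and> b \<in> {1..n} \<and> a \<noteq> b \<and>
       \<not> d_separated E a b
          (\<Union>{C \<in> P. (C, blk P a) \<in> \<pi> \<or> (C, blk P b) \<in> \<pi>} - {a, b})})"

definition E2 :: "nat \<Rightarrow> (nat \<times> nat) set \<Rightarrow> nat set set \<times> (nat set \<times> nat set) set \<Rightarrow> (nat \<times> nat \<times> nat) set" where
  "E2 n E s = (case s of (P, \<pi>) \<Rightarrow>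
     {(a, b, c). a \<in> {1..n} \<and> b \<in> {1..n} \<and> c \<in> {1..n} \<and> distinct [a, b, c] \<and>
       (a, b) \<in> E1 n E s \<and> (c, b) \<in> E1 n E s \<and> (a, c) \<notin> E1 n E s \<and>
       ((blk P b, blk P a) \<in> \<pi> \<or> (blk P b, blk P c) \<in> \<pi>)})"

definition S1 :: "nat \<Rightarrow> (nat \<times> nat) set \<Rightarrow> (nat set set \<times> (nat set \<times> nat set) set) set" where
  "S1 n E = {s \<in> POP n. \<forall>t \<in> POP n. card (E1 n E s) \<le> card (E1 n E t)}"

definition S2 :: "nat \<Rightarrow> (nat \<times> nat) set \<Rightarrow> (nat set set \<times> (nat set \<times> nat set) set) set" where
  "S2 n E = {s \<in> S1 n E. \<forall>t \<in> S1 n E. card (E2 n E s) \<le> card (E2 n E t)}"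

definition sccs :: "nat \<Rightarrow> (nat \<times> nat) set \<Rightarrow> nat set set" where
  "sccs n E = (\<lambda>i. {j \<in> {1..n}. (i, j) \<in> E\<^sup>* \<and> (j, i) \<in> E\<^sup>*}) ` {1..n}"

definition scc_order :: "nat \<Rightarrow> (nat \<times> nat) set \<Rightarrow> (nat set \<times> nat set) set" where
  "scc_order n E = {(C1, C2). C1 \<in> sccs n E \<and> C2 \<in> sccs n E \<and>
     (C1 = C2 \<or> (\<exists>u\<in>C1. \<exists>v\<in>C2. (u, v) \<in> E\<^sup>*))}"

definition assoc_pop :: "nat \<Rightarrow> (nat \<times> nat) set \<Rightarrow> nat set set \<times> (nat set \<times> nat set) set" where
  "assoc_pop n E = (sccs n E, scc_order n E)"

end

theory Submission
  imports Defs
begin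

definition dwalk :: "(nat \<times> nat) set \<Rightarrow> nat set \<Rightarrow> nat list \<Rightarrow> bool list \<Rightarrow> bool" where
  "dwalk E Z vs ds \<longleftrightarrow> 2 \<le> length vs \<and> length ds = length vs - 1 \<and>
     (\<forall>i < length ds. if ds ! i then (vs ! i, vs ! Suc i) \<in> E else (vs ! Suc i, vs ! i) \<in> E) \<and>
     (\<forall>i. 0 < i \<and> i < length ds \<longrightarrow>
        (if ds ! (i - 1) \<and> \<not> ds ! i
         then (\<exists>z\<in>Z. ancestor E (vs ! i) z)
         else vs ! i \<notin> Z))"

lemma dcp_iff: "d_connecting_path E a b Z vs ds \<longleftrightarrow> distinct vs \<and> dwalk E Z vs ds \<and> hd vs = a \<and> last vs = b"
  unfolding d_connecting_path_def dwalk_def by auto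

lemma dwalk_lens: "dwalk E Z vs ds \<Longrightarrow> 2 \<le> length vs \<and> length ds = length vs - 1"
  unfolding dwalk_def by blast

lemma dwalk_edge_fwd: "(u, v) \<in> E \<Longrightarrow> dwalk E Z [u, v] [True]"
  unfolding dwalk_def by auto

lemma dwalk_edge_bwd: "(v, u) \<in> E \<Longrightarrow> dwalk E Z [u, v] [False]"
  unfolding dwalk_def by auto

lemma dwalk_collider: "(u, d) \<in> E \<Longrightarrow> (w, d) \<in> E \<Longrightarrow> z \<in> Z \<Longrightarrow> ancestor E d z \<Longrightarrow> dwalk E Z [u, d, w] [True, False]"
  unfolding dwalk_def by (auto simp: less_Suc_eq nth_Cons')

lemma dwalk_concat:
  assumes w1: "dwalk E Z vs1 ds1" and w2: "dwalk E Z vs2 ds2" and j: "last vs1 = hd vs2"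
    and jc: "if last ds1 \<and> \<not> hd ds2 then (\<exists>z\<in>Z. ancestor E (last vs1) z) else last vs1 \<notin> Z"
  shows "dwalk E Z (vs1 @ tl vs2) (ds1 @ ds2)"
proof -
  define m where "m = length ds1"
  have l1: "length vs1 = Suc m" and l2: "length ds2 = length vs2 - 1" "2 \<le> length vs1" "2 \<le> length vs2"
    using dwalk_lens[OF w1] dwalk_lens[OF w2] unfolding m_def by auto
  have m0: "0 < m" using l1 l2 by simp
  have lastm: "vs1 ! m = last vs1" using l1 by (metis diff_Suc_1 last_conv_nth list.size(3) nat.distinct(1))
  have ds2ne: "ds2 \<noteq> []" using l2 by auto
  let ?vs = "vs1 @ tl vs2" and ?ds = "ds1 @ ds2"
  have lv: "length ?vs = Suc m + length vs2 - 1" using l1 l2 by simp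
  have ld: "length ?ds = length ?vs - 1" using l1 l2 m_def by simp
  have vA: "?vs ! k = vs1 ! k" if "k \<le> m" for k using that l1 by (simp add: nth_append)
  have vB: "?vs ! k = vs2 ! (k - m)" if "m \<le> k" "k < length ?vs" for k
  proof (cases "k = m")
    case True
    have "vs1 ! m = last vs1" using l1 by (metis diff_Suc_1 last_conv_nth list.size(3) nat.distinct(1))
    moreover have "hd vs2 = vs2 ! 0" using l2 by (cases vs2) auto
    ultimately show ?thesis using True l1 j by (simp add: nth_append)
  next
    case False
    then show ?thesis using that l1 l2 by (simp add: nth_append nth_tl) (metis Suc_diff_Suc le_neq_implies_less)
  qed
  have dA: "?ds ! k = ds1 ! k" if "k < m" for k using that by (simp add: nth_append m_def)
  have dB: "?ds ! k = ds2 ! (k - m)" if "m \<le> k" for k using that by (simp add: nth_append m_def)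
  have e1: "\<forall>i < length ds1. if ds1 ! i then (vs1 ! i, vs1 ! Suc i) \<in> E else (vs1 ! Suc i, vs1 ! i) \<in> E"
    and e2: "\<forall>i < length ds2. if ds2 ! i then (vs2 ! i, vs2 ! Suc i) \<in> E else (vs2 ! Suc i, vs2 ! i) \<in> E"
    and c1: "\<forall>i. 0 < i \<and> i < length ds1 \<longrightarrow> (if ds1 ! (i - 1) \<and> \<not> ds1 ! i then (\<exists>z\<in>Z. ancestor E (vs1 ! i) z) else vs1 ! i \<notin> Z)"
    and c2: "\<forall>i. 0 < i \<and> i < length ds2 \<longrightarrow> (if ds2 ! (i - 1) \<and> \<not> ds2 ! i then (\<exists>z\<in>Z. ancestor E (vs2 ! i) z) else vs2 ! i \<notin> Z)"
    using w1 w2 unfolding dwalk_def by blast+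
  have E: "if ?ds ! i then (?vs ! i, ?vs ! Suc i) \<in> E else (?vs ! Suc i, ?vs ! i) \<in> E" if "i < length ?ds" for i
  proof (cases "i < m")
    case True
    then show ?thesis using e1 vA[of i] vA[of "Suc i"] dA[of i] m_def by auto
  next
    case False
    have "i - m < length ds2" using that False m_def by auto
    moreover have "Suc i - m = Suc (i - m)" using False by simp
    ultimately show ?thesis using e2 vB[of i] vB[of "Suc i"] dB[of i] False that ld by auto
  qed
  have C: "if ?ds ! (i - 1) \<and> \<not> ?ds ! i then (\<exists>z\<in>Z. ancestor E (?vs ! i) z) else ?vs ! i \<notin> Z"
    if "0 < i" "i < length ?ds" for i
  proof -
    consider "i < m" | "i = m" | "m < i" by linarith
    then show ?thesis
    proof cases
      case 1
      then show ?thesis using c1 that vA[of i] dA[of i] dA[of "i - 1"] m_def by auto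
    next
      case 2
      have "?ds ! (i - 1) = last ds1" using 2 m0 dA[of "i - 1"] m_def by (simp add: last_conv_nth)
      moreover have "?ds ! i = hd ds2" using 2 dB[of i] ds2ne by (simp add: hd_conv_nth)
      moreover have "?vs ! i = last vs1" using 2 vA[of i] lastm by simp
      ultimately show ?thesis using jc by simp
    next
      case 3
      have "i - m < length ds2" "0 < i - m" using that 3 m_def by auto
      moreover have "i - 1 - m = i - m - 1" by simp
      ultimately show ?thesis using c2 vB[of i] dB[of i] dB[of "i - 1"] 3 that ld by auto
    qed
  qed
  have len2: "2 \<le> length ?vs" using lv l2 by simp
  show ?thesis unfolding dwalk_def
  proof (intro conjI allI impI)
    fix i assume "i < length ?ds" then show "if ?ds ! i then (?vs ! i, ?vs ! Suc i) \<in> E else (?vs ! Suc i, ?vs ! i) \<in> E" by (rule E)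
  next
    fix i assume "0 < i \<and> i < length ?ds"
    then show "if ?ds ! (i - 1) \<and> \<not> ?ds ! i then (\<exists>z\<in>Z. ancestor E (?vs ! i) z) else ?vs ! i \<notin> Z"
      using C by blast
  qed (use len2 ld in auto)
qed

lemma dwalk_concat_ends:
  assumes "dwalk E Z vs1 ds1" "dwalk E Z vs2 ds2"
  shows "hd (vs1 @ tl vs2) = hd vs1" "last (vs1 @ tl vs2) = last vs2" "last (ds1 @ ds2) = last ds2"
proof -
  have l: "2 \<le> length vs1" "2 \<le> length vs2" "length ds2 = length vs2 - 1" using assms dwalk_lens by auto
  have "length (tl vs2) \<ge> 1" "length ds2 \<ge> 1" "length vs1 \<ge> 1" using l by auto
  then have "vs1 \<noteq> []" "tl vs2 \<noteq> []" "ds2 \<noteq> []" by (metis le_numeral_extra(2) list.size(3))+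
  then show "hd (vs1 @ tl vs2) = hd vs1" "last (vs1 @ tl vs2) = last vs2" "last (ds1 @ ds2) = last ds2"
    by (auto simp: last_tl)
qed

lemma dwalk_rev:
  assumes w: "dwalk E Z vs ds"
  shows "dwalk E Z (rev vs) (map Not (rev ds))"
proof -
  define L where "L = length ds"
  have lv: "length vs = Suc L" "2 \<le> length vs" using dwalk_lens[OF w] unfolding L_def by auto
  have e: "\<forall>i < length ds. if ds ! i then (vs ! i, vs ! Suc i) \<in> E else (vs ! Suc i, vs ! i) \<in> E"
    and c: "\<forall>i. 0 < i \<and> i < length ds \<longrightarrow> (if ds ! (i - 1) \<and> \<not> ds ! i then (\<exists>z\<in>Z. ancestor E (vs ! i) z) else vs ! i \<notin> Z)"
    using w unfolding dwalk_def by blast+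
  have rv: "rev vs ! k = vs ! (L - k)" if "k \<le> L" for k using that lv by (simp add: rev_nth)
  have rd: "map Not (rev ds) ! k = (\<not> ds ! (L - 1 - k))" if "k < L" for k using that L_def by (simp add: rev_nth)
  have E: "if map Not (rev ds) ! i then (rev vs ! i, rev vs ! Suc i) \<in> E else (rev vs ! Suc i, rev vs ! i) \<in> E"
    if "i < L" for i
  proof -
    define j where "j = L - 1 - i"
    have j: "j < length ds" "Suc j = L - i" "L - Suc i = j" using that L_def j_def by auto
    have eq1: "rev vs ! i = vs ! Suc j" using rv[of i] that j(2) by simp
    have eq2: "rev vs ! Suc i = vs ! j" using rv[of "Suc i"] that j(3) by simp
    have eq3: "map Not (rev ds) ! i = (\<not> ds ! j)" using rd[of i] that unfolding j_def by simp
    note eq = eq1 eq2 eq3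
    show ?thesis using e[rule_format, OF j(1)] unfolding eq by simp
  qed
  have C: "if map Not (rev ds) ! (i - 1) \<and> \<not> map Not (rev ds) ! i then (\<exists>z\<in>Z. ancestor E (rev vs ! i) z) else rev vs ! i \<notin> Z"
    if "0 < i" "i < L" for i
  proof -
    define k where "k = L - i"
    have k: "0 < k \<and> k < length ds" using that L_def k_def by auto
    have eq1: "rev vs ! i = vs ! k" using rv[of i] that unfolding k_def by simp
    have eq2: "map Not (rev ds) ! i = (\<not> ds ! (k - 1))" using rd[of i] that unfolding k_def by (simp add: diff_commute)
    have eq3: "map Not (rev ds) ! (i - 1) = (\<not> ds ! k)" using rd[of "i - 1"] that unfolding k_def by simp
    note eq = eq1 eq2 eq3
    show ?thesis using c[rule_format, OF k] unfolding eq by auto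
  qed
  have lens: "length (map Not (rev ds)) = L" "length (rev vs) = Suc L" using lv L_def by auto
  show ?thesis unfolding dwalk_def lens
  proof (intro conjI allI impI)
    fix i assume "i < L" then show "if map Not (rev ds) ! i then (rev vs ! i, rev vs ! Suc i) \<in> E else (rev vs ! Suc i, rev vs ! i) \<in> E" by (rule E)
  next
    fix i assume "0 < i \<and> i < L"
    then show "if map Not (rev ds) ! (i - 1) \<and> \<not> map Not (rev ds) ! i then (\<exists>z\<in>Z. ancestor E (rev vs ! i) z) else rev vs ! i \<notin> Z"
      using C by blast
  qed (use lv in auto)
qed

lemma dwalk_rev_ends:
  assumes "dwalk E Z vs ds"
  shows "hd (rev vs) = last vs" "last (rev vs) = hd vs" "hd (map Not (rev ds)) = (\<not> last ds)"
    "last (map Not (rev ds)) = (\<not> hd ds)"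
proof -
  have "length ds \<ge> 1" "length vs \<ge> 1" using dwalk_lens[OF assms] by auto
  then have "ds \<noteq> []" "vs \<noteq> []" by (metis le_numeral_extra(2) list.size(3))+
  then show "hd (rev vs) = last vs" "last (rev vs) = hd vs" "hd (map Not (rev ds)) = (\<not> last ds)"
    "last (map Not (rev ds)) = (\<not> hd ds)" by (auto simp: hd_rev last_rev hd_map last_map)
qed

lemma dwalkD:
  assumes "dwalk E Z vs ds"
  shows "2 \<le> length vs" "length ds = length vs - 1"
    "\<And>i. i < length ds \<Longrightarrow> if ds ! i then (vs ! i, vs ! Suc i) \<in> E else (vs ! Suc i, vs ! i) \<in> E"
    "\<And>i. 0 < i \<Longrightarrow> i < length ds \<Longrightarrow> (if ds ! (i - 1) \<and> \<not> ds ! i then (\<exists>z\<in>Z. ancestor E (vs ! i) z) else vs ! i \<notin> Z)"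
  using assms unfolding dwalk_def by blast+

lemma dwalkI:
  assumes "2 \<le> length vs" "length ds = length vs - 1"
    "\<And>i. i < length ds \<Longrightarrow> if ds ! i then (vs ! i, vs ! Suc i) \<in> E else (vs ! Suc i, vs ! i) \<in> E"
    "\<And>i. 0 < i \<Longrightarrow> i < length ds \<Longrightarrow> (if ds ! (i - 1) \<and> \<not> ds ! i then (\<exists>z\<in>Z. ancestor E (vs ! i) z) else vs ! i \<notin> Z)"
  shows "dwalk E Z vs ds"
  using assms unfolding dwalk_def by blast

lemma dwalk_chain:
  assumes "(u, v) \<in> E\<^sup>+" "\<forall>w. (u, w) \<in> E\<^sup>+ \<longrightarrow> w \<notin> Z"
  shows "\<exists>vs ds. dwalk E Z vs ds \<and> hd vs = u \<and> last vs = v \<and> (\<forall>x\<in>set ds. x)"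
  using assms
proof (induction u rule: converse_trancl_induct)
  case (base y)
  then show ?case using dwalk_edge_fwd[of y v E Z] by fastforce
next
  case (step y z)
  have "\<forall>w. (z, w) \<in> E\<^sup>+ \<longrightarrow> w \<notin> Z" using step.prems step.hyps(1) by (meson trancl_into_trancl2)
  then obtain vs ds where w: "dwalk E Z vs ds" "hd vs = z" "last vs = v" "\<forall>x\<in>set ds. x"
    using step.IH by blast
  have "ds \<noteq> []" using dwalkD(1,2)[OF w(1)] by auto
  then have hds: "hd ds" using w(4) hd_in_set by blast
  have zZ: "z \<notin> Z" using step.prems step.hyps(1) by blast
  have w0: "dwalk E Z [y, z] [True]" by (rule dwalk_edge_fwd) (rule step.hyps(1))
  have "dwalk E Z ([y, z] @ tl vs) ([True] @ ds)"
    by (rule dwalk_concat[OF w0 w(1)]) (use w(2) hds zZ in simp_all)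
  moreover have "hd ([y, z] @ tl vs) = y" by simp
  moreover have "last ([y, z] @ tl vs) = v" using dwalk_concat_ends(2)[OF w0 w(1)] w(3) by simp
  moreover have "\<forall>x\<in>set ([True] @ ds). x" using w(4) by simp
  ultimately show ?case by blast
qed

lemma fwd_collider:
  assumes w: "dwalk E Z vs ds"
  shows "i \<le> m \<Longrightarrow> m < length ds \<Longrightarrow> ds ! i \<Longrightarrow> \<not> ds ! m \<Longrightarrow>
     \<exists>k. i < k \<and> k \<le> m \<and> ds ! (k - 1) \<and> \<not> ds ! k \<and> (vs ! i, vs ! k) \<in> E\<^sup>*"
proof (induction "m - i" arbitrary: i)
  case 0
  then show ?case by (metis diff_is_0_eq le_antisym)
next
  case (Suc x)
  have im: "i < m" using Suc by (metis le_neq_implies_less)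
  have ed: "(vs ! i, vs ! Suc i) \<in> E" using dwalkD(3)[OF w, of i] Suc.prems im by simp
  show ?case
  proof (cases "ds ! Suc i")
    case False
    then show ?thesis using im Suc.prems ed by (intro exI[of _ "Suc i"]) auto
  next
    case True
    have "x = m - Suc i" using Suc.hyps by simp
    then obtain k where k: "Suc i < k" "k \<le> m" "ds ! (k - 1)" "\<not> ds ! k" "(vs ! Suc i, vs ! k) \<in> E\<^sup>*"
      using Suc.hyps(1)[of "Suc i"] Suc.prems True im by auto
    then show ?thesis using ed by (intro exI[of _ k]) (auto intro: converse_rtrancl_into_rtrancl)
  qed
qed

lemma dwalk_to_path:
  "dwalk E Z vs ds \<Longrightarrow> hd vs \<noteq> last vs \<Longrightarrow> \<exists>vs' ds'. d_connecting_path E (hd vs) (last vs) Z vs' ds'"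
proof (induction "length vs" arbitrary: vs ds rule: less_induct)
  case less
  note w = less.prems(1)
  show ?case
  proof (cases "distinct vs")
    case True
    then show ?thesis using w dcp_iff by blast
  next
    case False
    then obtain i j where ij: "i < j" "j < length vs" "vs ! i = vs ! j"
      by (metis distinct_conv_nth linorder_neqE_nat)
    define L where "L = length ds"
    have lv: "length vs = Suc L" using dwalkD(1,2)[OF w] L_def by simp
    have jL: "j \<le> L" using ij lv by simp
    define vs' where "vs' = take (Suc i) vs @ drop (Suc j) vs"
    define ds' where "ds' = take i ds @ drop j ds"
    define h where "h k = (if k < i then k else k + (j - i))" for k
    have lvs': "length vs' = Suc i + L - j" unfolding vs'_def using ij lv by simp
    have lds': "length ds' = i + L - j" unfolding ds'_def using ij jL L_def by simp
    have hv: "vs' ! k = vs ! h k" if "k < length vs'" for k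
    proof (cases "k \<le> i")
      case True
      have "vs' ! k = vs ! k" unfolding vs'_def using True ij by (simp add: nth_append)
      then show ?thesis using True ij unfolding h_def by (cases "k = i") auto
    next
      case False
      have "vs' ! k = drop (Suc j) vs ! (k - Suc i)" unfolding vs'_def using False ij by (simp add: nth_append)
      also have "\<dots> = vs ! (Suc j + (k - Suc i))" using that lvs' ij lv False by (intro nth_drop) auto
      also have "Suc j + (k - Suc i) = h k" unfolding h_def using False ij by simp
      finally show ?thesis .
    qed
    have hd': "ds' ! k = ds ! h k" if "k < length ds'" for k
    proof (cases "k < i")
      case True
      then show ?thesis unfolding ds'_def h_def using ij jL L_def by (simp add: nth_append)
    next
      case False
      have "ds' ! k = drop j ds ! (k - i)" unfolding ds'_def using False ij jL L_def by (simp add: nth_append)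
      also have "\<dots> = ds ! (j + (k - i))" using that lds' ij jL L_def False by (intro nth_drop) auto
      also have "j + (k - i) = h k" unfolding h_def using False ij by simp
      finally show ?thesis .
    qed
    have hlt: "h k < L" if "k < length ds'" for k using that lds' ij unfolding h_def by auto
    have hvS: "vs' ! Suc k = vs ! Suc (h k)" if "k < length ds'" for k
    proof -
      have "vs' ! Suc k = vs ! h (Suc k)" using hv[of "Suc k"] that lds' lvs' by simp
      moreover have "vs ! h (Suc k) = vs ! Suc (h k)"
      proof (cases "Suc k = i")
        case True
        then show ?thesis unfolding h_def using ij by simp
      next
        case False
        then show ?thesis unfolding h_def by auto
      qed
      ultimately show ?thesis by simp
    qed
    have hdv: "hd vs' = hd vs"
    proof -
      have "vs' \<noteq> []" "vs \<noteq> []" using lvs' lv jL by auto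
      then have "hd vs' = vs' ! 0" "hd vs = vs ! 0" by (simp_all add: hd_conv_nth)
      moreover have "vs' ! 0 = vs ! h 0" using hv[of 0] lvs' jL by simp
      moreover have "vs ! h 0 = vs ! 0" unfolding h_def using ij by (cases "i = 0") auto
      ultimately show ?thesis by simp
    qed
    have lastv: "last vs' = last vs"
    proof -
      have "vs' \<noteq> []" "vs \<noteq> []" using lvs' lv jL by auto
      then have "last vs' = vs' ! (i + L - j)" "last vs = vs ! L" using lvs' lv by (simp_all add: last_conv_nth)
      moreover have "vs' ! (i + L - j) = vs ! h (i + L - j)" using hv[of "i + L - j"] lvs' jL by simp
      moreover have "h (i + L - j) = L" unfolding h_def using jL ij by auto
      ultimately show ?thesis by simp
    qed
    have len2: "2 \<le> length vs'"
    proof (rule ccontr)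
      assume "\<not> 2 \<le> length vs'"
      then have "length vs' = 1" using lvs' jL by simp
      then have "hd vs' = last vs'" by (cases vs') auto
      then show False using hdv lastv less.prems(2) by simp
    qed
    have W': "dwalk E Z vs' ds'"
    proof (rule dwalkI)
      show "2 \<le> length vs'" by (rule len2)
      show "length ds' = length vs' - 1" using lds' lvs' by simp
    next
      fix k assume k: "k < length ds'"
      show "if ds' ! k then (vs' ! k, vs' ! Suc k) \<in> E else (vs' ! Suc k, vs' ! k) \<in> E"
        using dwalkD(3)[OF w, of "h k"] hlt[OF k] hd'[OF k] hvS[OF k] hv[of k] k lds' lvs' L_def by simp
    next
      fix k assume k0: "0 < k" and k: "k < length ds'"
      have km: "k - 1 < length ds'" using k by simp
      show "if ds' ! (k - 1) \<and> \<not> ds' ! k then (\<exists>z\<in>Z. ancestor E (vs' ! k) z) else vs' ! k \<notin> Z"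
      proof (cases "k = i")
        case False
        have t: "h (k - 1) = h k - 1" "0 < h k" unfolding h_def using False k0 by auto
        have eqs: "ds' ! (k - 1) = ds ! (h k - 1)" "ds' ! k = ds ! h k" "vs' ! k = vs ! h k"
          using hd'[OF km] hd'[OF k] hv[of k] t k lds' lvs' by auto
        show ?thesis unfolding eqs using dwalkD(4)[OF w, of "h k"] t hlt[OF k] L_def by simp
      next
        case True
        have jL': "j < L" using k True lds' by simp
        have eqs: "ds' ! (k - 1) = ds ! (i - 1)" "ds' ! k = ds ! j" "vs' ! k = vs ! j"
          using hd'[OF km] hd'[OF k] hv[of k] True k0 k lds' lvs' ij unfolding h_def by auto
        have ci: "if ds ! (i - 1) \<and> \<not> ds ! i then (\<exists>z\<in>Z. ancestor E (vs ! i) z) else vs ! i \<notin> Z"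
          using dwalkD(4)[OF w, of i] True k0 ij jL' L_def by simp
        have cj: "if ds ! (j - 1) \<and> \<not> ds ! j then (\<exists>z\<in>Z. ancestor E (vs ! j) z) else vs ! j \<notin> Z"
          using dwalkD(4)[OF w, of j] ij jL' L_def by simp
        show ?thesis unfolding eqs
        proof (cases "ds ! (i - 1) \<and> \<not> ds ! j")
          case False
          then show "if ds ! (i - 1) \<and> \<not> ds ! j then (\<exists>z\<in>Z. ancestor E (vs ! j) z) else vs ! j \<notin> Z"
            using ci cj ij by (auto split: if_splits)
        next
          case cc: True
          have "\<exists>z\<in>Z. ancestor E (vs ! j) z"
          proof (cases "\<not> ds ! i \<or> ds ! (j - 1)")
            case True
            then show ?thesis using ci cj cc ij by (auto split: if_splits)
          next
            case False
            then have dd: "ds ! i" "\<not> ds ! (j - 1)" by auto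
            have ij1: "i \<le> j - 1" "j - 1 < length ds" using ij jL' L_def by auto
            obtain m where m: "i < m" "m \<le> j - 1" "ds ! (m - 1)" "\<not> ds ! m" "(vs ! i, vs ! m) \<in> E\<^sup>*"
              using fwd_collider[OF w ij1 dd] by blast
            have "\<exists>z\<in>Z. ancestor E (vs ! m) z" using dwalkD(4)[OF w, of m] m jL' L_def by auto
            then show ?thesis using m(5) ij unfolding ancestor_def by (metis rtrancl_trans)
          qed
          then show "if ds ! (i - 1) \<and> \<not> ds ! j then (\<exists>z\<in>Z. ancestor E (vs ! j) z) else vs ! j \<notin> Z"
            using cc by simp
        qed
      qed
    qed
    have "length vs' < length vs" using lvs' lv ij by simp
    then have "\<exists>vs'' ds''. d_connecting_path E (hd vs') (last vs') Z vs'' ds''"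
      using less.hyps W' hdv lastv less.prems(2) by metis
    then show ?thesis using hdv lastv by simp
  qed
qed

lemma anc_trancl: "ancestor E d x \<Longrightarrow> d \<noteq> x \<Longrightarrow> (d, x) \<in> E\<^sup>+"
  unfolding ancestor_def by (simp add: rtrancl_eq_or_trancl)

lemma notanc_NZ:
  assumes "\<not> (\<exists>z\<in>Z. ancestor E d z)"
  shows "\<forall>w. (d, w) \<in> E\<^sup>+ \<longrightarrow> w \<notin> Z" "d \<notin> Z"
  using assms unfolding ancestor_def by (auto dest: trancl_into_rtrancl)

lemma padj_walkP:
  assumes pa: "p_adjacent E x b" and xZ: "x \<notin> Z" and bZ: "b \<notin> Z" and nl: "\<forall>a. (a, a) \<notin> E"
  shows "\<exists>vs ds. dwalk E Z vs ds \<and> hd vs = x \<and> last vs = b \<and> (\<not> last ds \<or> (\<forall>y\<in>set ds. y))"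
proof -
  consider "(x, b) \<in> E" | "(b, x) \<in> E" | d where "(x, d) \<in> E" "(b, d) \<in> E" "ancestor E d x \<or> ancestor E d b"
    using pa unfolding p_adjacent_def by blast
  then show ?thesis
  proof cases
    case 1
    then show ?thesis using dwalk_edge_fwd[OF 1, of Z] by fastforce
  next
    case 2
    then show ?thesis using dwalk_edge_bwd[OF 2, of Z] by fastforce
  next
    case 3
    show ?thesis
    proof (cases "\<exists>z\<in>Z. ancestor E d z")
      case True
      then obtain z where "z \<in> Z" "ancestor E d z" by blast
      then have "dwalk E Z [x, d, b] [True, False]" using dwalk_collider 3 by blast
      then show ?thesis by fastforce
    next
      case False
      note NZ = notanc_NZ[OF False]
      show ?thesis
      proof (cases "ancestor E d b")
        case True
        have "d \<noteq> b" using 3 nl by auto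
        then have "(d, b) \<in> E\<^sup>+" using anc_trancl True by blast
        then obtain vs ds where w: "dwalk E Z vs ds" "hd vs = d" "last vs = b" "\<forall>y\<in>set ds. y"
          using dwalk_chain NZ(1) by blast
        have "ds \<noteq> []" using dwalkD(1,2)[OF w(1)] by auto
        then have hds: "hd ds" using w(4) hd_in_set by blast
        have w0: "dwalk E Z [x, d] [True]" by (rule dwalk_edge_fwd) (rule 3(1))
        have "dwalk E Z ([x, d] @ tl vs) ([True] @ ds)"
          by (rule dwalk_concat[OF w0 w(1)]) (use w(2) hds NZ(2) in simp_all)
        moreover have "last ([x, d] @ tl vs) = b" using dwalk_concat_ends(2)[OF w0 w(1)] w(3) by simp
        moreover have "\<forall>y\<in>set ([True] @ ds). y" using w(4) by simp
        ultimately show ?thesis by fastforce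
      next
        case False
        then have anc: "ancestor E d x" using 3 by blast
        have "d \<noteq> x" using 3 nl by auto
        then have "(d, x) \<in> E\<^sup>+" using anc_trancl anc by blast
        then obtain vs ds where w: "dwalk E Z vs ds" "hd vs = d" "last vs = x" "\<forall>y\<in>set ds. y"
          using dwalk_chain NZ(1) by blast
        have "ds \<noteq> []" using dwalkD(1,2)[OF w(1)] by auto
        then have hds: "hd ds" using w(4) hd_in_set by blast
        have w0: "dwalk E Z [b, d] [True]" by (rule dwalk_edge_fwd) (rule 3(2))
        have w1: "dwalk E Z ([b, d] @ tl vs) ([True] @ ds)"
          by (rule dwalk_concat[OF w0 w(1)]) (use w(2) hds NZ(2) in simp_all)
        have l1: "last ([b, d] @ tl vs) = x" using dwalk_concat_ends(2)[OF w0 w(1)] w(3) by simp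
        have w2: "dwalk E Z (rev ([b, d] @ tl vs)) (map Not (rev ([True] @ ds)))" by (rule dwalk_rev[OF w1])
        have "hd (rev ([b, d] @ tl vs)) = x" using dwalk_rev_ends(1)[OF w1] l1 by simp
        moreover have "last (rev ([b, d] @ tl vs)) = b" using dwalk_rev_ends(2)[OF w1] by simp
        moreover have "\<not> last (map Not (rev ([True] @ ds)))" using dwalk_rev_ends(4)[OF w1] by simp
        ultimately show ?thesis using w2 by blast
      qed
    qed
  qed
qed

lemma padj_dconn:
  assumes pa: "p_adjacent E x b" and xZ: "x \<notin> Z" and bZ: "b \<notin> Z" and nl: "\<forall>a. (a, a) \<notin> E"
  shows "\<not> d_separated E x b Z"
proof -
  obtain vs ds where "dwalk E Z vs ds" "hd vs = x" "last vs = b" using padj_walkP[OF assms] by blast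
  moreover have "x \<noteq> b" using pa unfolding p_adjacent_def by simp
  ultimately show ?thesis unfolding d_separated_def using dwalk_to_path by metis
qed

lemma conductor_walk:
  assumes pab: "p_adjacent E a b" and pcb: "p_adjacent E c b"
    and aZ: "a \<notin> Z" and bZ: "b \<notin> Z" and cZ: "c \<notin> Z" and nl: "\<forall>a. (a, a) \<notin> E"
    and anc: "ancestor E b a"
  shows "\<exists>vs ds. dwalk E Z vs ds \<and> hd vs = a \<and> last vs = c"
proof -
  obtain vsa dsa where wa: "dwalk E Z vsa dsa" "hd vsa = a" "last vsa = b" "\<not> last dsa \<or> (\<forall>y\<in>set dsa. y)"
    using padj_walkP[OF pab aZ bZ nl] by blast
  obtain vsc dsc where wc: "dwalk E Z vsc dsc" "hd vsc = c" "last vsc = b" "\<not> last dsc \<or> (\<forall>y\<in>set dsc. y)"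
    using padj_walkP[OF pcb cZ bZ nl] by blast
  note rc = dwalk_rev[OF wc(1)]
  note rce = dwalk_rev_ends[OF wc(1)]
  have concat_ok: "\<exists>vs ds. dwalk E Z vs ds \<and> hd vs = a \<and> last vs = c"
    if jc: "if last dsa \<and> \<not> hd (map Not (rev dsc)) then (\<exists>z\<in>Z. ancestor E (last vsa) z) else last vsa \<notin> Z"
  proof -
    have "last vsa = hd (rev vsc)" using wa(3) wc(3) rce(1) by simp
    then have "dwalk E Z (vsa @ tl (rev vsc)) (dsa @ map Not (rev dsc))"
      using dwalk_concat[OF wa(1) rc _ jc] by blast
    moreover have "hd (vsa @ tl (rev vsc)) = a" using dwalk_concat_ends(1)[OF wa(1) rc] wa(2) by simp
    moreover have "last (vsa @ tl (rev vsc)) = c" using dwalk_concat_ends(2)[OF wa(1) rc] rce(2) wc(2) by simp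
    ultimately show ?thesis by blast
  qed
  show ?thesis
  proof (cases "last dsa \<and> last dsc")
    case False
    have "if last dsa \<and> \<not> hd (map Not (rev dsc)) then (\<exists>z\<in>Z. ancestor E (last vsa) z) else last vsa \<notin> Z"
      using False rce(3) wa(3) bZ by auto
    then show ?thesis by (rule concat_ok)
  next
    case True
    show ?thesis
    proof (cases "\<exists>z\<in>Z. ancestor E b z")
      case True
      have "if last dsa \<and> \<not> hd (map Not (rev dsc)) then (\<exists>z\<in>Z. ancestor E (last vsa) z) else last vsa \<notin> Z"
        using True rce(3) wa(3) \<open>last dsa \<and> last dsc\<close> by simp
      then show ?thesis by (rule concat_ok)
    next
      case False
      note NZ = notanc_NZ[OF False]
      have allc: "\<forall>y\<in>set dsc. y" using wc(4) \<open>last dsa \<and> last dsc\<close> by blast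
      have "b \<noteq> a" using pab unfolding p_adjacent_def by auto
      then have "(b, a) \<in> E\<^sup>+" using anc_trancl anc by blast
      then obtain vs ds where w: "dwalk E Z vs ds" "hd vs = b" "last vs = a" "\<forall>y\<in>set ds. y"
        using dwalk_chain NZ(1) by blast
      have "ds \<noteq> []" using dwalkD(1,2)[OF w(1)] by auto
      then have hds: "hd ds" using w(4) hd_in_set by blast
      have w1: "dwalk E Z (vsc @ tl vs) (dsc @ ds)"
        by (rule dwalk_concat[OF wc(1) w(1)]) (use w(2) wc(3) hds NZ(2) in simp_all)
      have l1: "last (vsc @ tl vs) = a" using dwalk_concat_ends(2)[OF wc(1) w(1)] w(3) by simp
      have h1: "hd (vsc @ tl vs) = c" using dwalk_concat_ends(1)[OF wc(1) w(1)] wc(2) by simp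
      have "dwalk E Z (rev (vsc @ tl vs)) (map Not (rev (dsc @ ds)))" by (rule dwalk_rev[OF w1])
      moreover have "hd (rev (vsc @ tl vs)) = a" using dwalk_rev_ends(1)[OF w1] l1 by simp
      moreover have "last (rev (vsc @ tl vs)) = c" using dwalk_rev_ends(2)[OF w1] h1 by simp
      ultimately show ?thesis by blast
    qed
  qed
qed

lemma path_sep_padj:
  assumes p: "d_connecting_path E a b Z vs ds"
    and Zan: "\<forall>z\<in>Z. ancestor E z a \<or> ancestor E z b"
    and Zfull: "\<forall>v. v \<in> {1..n} \<longrightarrow> v \<noteq> a \<longrightarrow> v \<noteq> b \<longrightarrow> (ancestor E v a \<or> ancestor E v b) \<longrightarrow> v \<in> Z"
    and Esub: "E \<subseteq> {1..n} \<times> {1..n}"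
  shows "p_adjacent E a b"
proof -
  have dv: "distinct vs" and w: "dwalk E Z vs ds" and ha: "hd vs = a" and lb: "last vs = b"
    using p dcp_iff by blast+
  define L where "L = length ds"
  have lv: "length vs = Suc L" "1 \<le> L" using dwalkD(1,2)[OF w] L_def by auto
  have v0: "vs ! 0 = a" using ha lv by (cases vs) auto
  have vL: "vs ! L = b" using lb lv by (metis diff_Suc_1 last_conv_nth list.size(3) nat.distinct(1))
  define An where "An x \<longleftrightarrow> ancestor E x a \<or> ancestor E x b" for x
  have step: "An x" if "(x, y) \<in> E" "An y" for x y
    using that unfolding An_def ancestor_def by (meson converse_rtrancl_into_rtrancl)
  have ancZ: "An x" if "\<exists>z\<in>Z. ancestor E x z" for x
    using that Zan unfolding An_def ancestor_def by (meson rtrancl_trans)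
  have ed: "if ds ! i then (vs ! i, vs ! Suc i) \<in> E else (vs ! Suc i, vs ! i) \<in> E" if "i < L" for i
    using dwalkD(3)[OF w, of i] that L_def by simp
  have cd: "if ds ! (i - 1) \<and> \<not> ds ! i then (\<exists>z\<in>Z. ancestor E (vs ! i) z) else vs ! i \<notin> Z"
    if "0 < i" "i < L" for i
    using dwalkD(4)[OF w, of i] that L_def by simp
  have R: "i < L \<Longrightarrow> ds ! i \<Longrightarrow> An (vs ! i)" for i
  proof (induction "L - i" arbitrary: i rule: less_induct)
    case less
    have e: "(vs ! i, vs ! Suc i) \<in> E" using ed[OF less.prems(1)] less.prems(2) by simp
    show ?case
    proof (cases "Suc i = L")
      case True
      then have "An (vs ! Suc i)" using vL unfolding An_def ancestor_def by simp
      then show ?thesis using step e by blast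
    next
      case False
      then have si: "Suc i < L" using less.prems by simp
      have "An (vs ! Suc i)"
      proof (cases "ds ! Suc i")
        case True
        then show ?thesis using less.hyps[of "Suc i"] si by simp
      next
        case False
        then show ?thesis using cd[of "Suc i"] si less.prems(2) ancZ by simp
      qed
      then show ?thesis using step e by blast
    qed
  qed
  have Lf: "0 < i \<Longrightarrow> i \<le> L \<Longrightarrow> \<not> ds ! (i - 1) \<Longrightarrow> An (vs ! i)" for i
  proof (induction i rule: less_induct)
    case (less i)
    have e: "(vs ! i, vs ! (i - 1)) \<in> E" using ed[of "i - 1"] less.prems by simp
    show ?case
    proof (cases "i = 1")
      case True
      then have "An (vs ! (i - 1))" using v0 unfolding An_def ancestor_def by simp
      then show ?thesis using step e by blast
    next
      case False
      then have i1: "0 < i - 1" "i - 1 < L" using less.prems by auto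
      have "An (vs ! (i - 1))"
      proof (cases "ds ! (i - 1 - 1)")
        case False
        then show ?thesis using less.IH[of "i - 1"] i1 by simp
      next
        case True
        then show ?thesis using cd[OF i1] less.prems(3) ancZ by simp
      qed
      then show ?thesis using step e by blast
    qed
  qed
  have coll: "ds ! (k - 1) \<and> \<not> ds ! k" if k: "0 < k" "k < L" for k
  proof (rule ccontr)
    assume nc: "\<not> (ds ! (k - 1) \<and> \<not> ds ! k)"
    then have nz: "vs ! k \<notin> Z" using cd[OF k] by simp
    have an: "An (vs ! k)" using nc R[of k] Lf[of k] k by auto
    have "vs ! k \<in> {1..n}" using ed[of k] k Esub by (auto split: if_splits)
    moreover have "vs ! k \<noteq> vs ! 0" "vs ! k \<noteq> vs ! L" using dv k lv by (simp_all add: nth_eq_iff_index_eq)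
    then have "vs ! k \<noteq> a" "vs ! k \<noteq> b" using v0 vL by simp_all
    ultimately have "vs ! k \<in> Z" using Zfull an unfolding An_def by blast
    then show False using nz by simp
  qed
  have "L \<le> 2"
  proof (rule ccontr)
    assume "\<not> L \<le> 2"
    then show False using coll[of 1] coll[of 2] by simp
  qed
  have "vs ! 0 \<noteq> vs ! L" using dv lv by (simp add: nth_eq_iff_index_eq)
  then have ab: "a \<noteq> b" using v0 vL by simp
  consider "L = 1" | "L = 2" using lv \<open>L \<le> 2\<close> by linarith
  then show ?thesis
  proof cases
    case 1
    from ab show ?thesis using ed[of 0] 1 v0 vL unfolding p_adjacent_def by (auto split: if_splits)
  next
    case 2
    note ab
    moreover have c: "ds ! 0" "\<not> ds ! 1" using coll[of 1] 2 by auto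
    moreover have "(a, vs ! 1) \<in> E" using ed[of 0] c 2 v0 by simp
    moreover have "(b, vs ! 1) \<in> E" using ed[of 1] c 2 vL by (simp add: numeral_2_eq_2)
    moreover have "An (vs ! 1)" using cd[of 1] c 2 ancZ by simp
    ultimately show ?thesis unfolding p_adjacent_def An_def by blast
  qed
qed

definition sccof :: "nat \<Rightarrow> (nat \<times> nat) set \<Rightarrow> nat \<Rightarrow> nat set" where
  "sccof n E i = {j \<in> {1..n}. (i, j) \<in> E\<^sup>* \<and> (j, i) \<in> E\<^sup>*}"

lemma sccs_eq: "sccs n E = sccof n E ` {1..n}"
  unfolding sccs_def sccof_def by simp

lemma sccof_self: "i \<in> {1..n} \<Longrightarrow> i \<in> sccof n E i"
  unfolding sccof_def by simp

lemma sccof_sub: "sccof n E i \<subseteq> {1..n}"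
  unfolding sccof_def by auto

lemma sccof_eq: "x \<in> sccof n E i \<Longrightarrow> sccof n E x = sccof n E i"
  unfolding sccof_def by (auto intro: rtrancl_trans)

lemma sccs_mem: "C \<in> sccs n E \<Longrightarrow> x \<in> C \<Longrightarrow> C = sccof n E x \<and> x \<in> {1..n}"
  unfolding sccs_eq using sccof_eq sccof_sub by fastforce

lemma partition_sccs: "partition_on {1..n} (sccs n E)"
proof (rule partition_onI)
  show "\<Union> (sccs n E) = {1..n}" unfolding sccs_eq using sccof_self sccof_sub by blast
next
  fix p q assume "p \<in> sccs n E" "q \<in> sccs n E" "p \<noteq> q"
  then show "disjnt p q" unfolding disjnt_def using sccs_mem by blast
next
  show "{} \<notin> sccs n E" unfolding sccs_eq using sccof_self by blast
qed

lemma blk_unique: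
  assumes "partition_on A P" "C \<in> P" "i \<in> C"
  shows "blk P i = C"
proof -
  have u: "C' = C" if "C' \<in> P \<and> i \<in> C'" for C'
  proof -
    have "disjoint P" using assms(1) unfolding partition_on_def by simp
    then show ?thesis using that assms(2,3) unfolding disjoint_def by blast
  qed
  show ?thesis unfolding blk_def
  proof (rule the_equality)
    show "C \<in> P \<and> i \<in> C" using assms by simp
  next
    fix C' assume "C' \<in> P \<and> i \<in> C'"
    then show "C' = C" by (rule u)
  qed
qed

lemma blk_in:
  assumes "partition_on A P" "i \<in> A"
  shows "blk P i \<in> P" "i \<in> blk P i"
proof -
  obtain C where "C \<in> P" "i \<in> C" using assms unfolding partition_on_def by blast
  then have "blk P i = C" using blk_unique[OF assms(1)] by simp
  then show "blk P i \<in> P" "i \<in> blk P i" using \<open>C \<in> P\<close> \<open>i \<in> C\<close> by simp_all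
qed

lemma blk_sccs: "i \<in> {1..n} \<Longrightarrow> blk (sccs n E) i = sccof n E i"
proof -
  assume i: "i \<in> {1..n}"
  have "sccof n E i \<in> sccs n E" using i unfolding sccs_eq by (rule imageI)
  then show ?thesis using blk_unique[OF partition_sccs _ sccof_self[OF i]] by simp
qed

lemma scc_order_iff:
  assumes "x \<in> {1..n}" "a \<in> {1..n}"
  shows "(sccof n E x, sccof n E a) \<in> scc_order n E \<longleftrightarrow> (x, a) \<in> E\<^sup>*"
proof
  assume "(sccof n E x, sccof n E a) \<in> scc_order n E"
  then consider "sccof n E x = sccof n E a" | u v where "u \<in> sccof n E x" "v \<in> sccof n E a" "(u, v) \<in> E\<^sup>*"
    unfolding scc_order_def by blast
  then show "(x, a) \<in> E\<^sup>*"
  proof cases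
    case 1
    then have "a \<in> sccof n E x" using sccof_self assms by blast
    then show ?thesis unfolding sccof_def by simp
  next
    case 2
    then show ?thesis unfolding sccof_def by (auto intro: rtrancl_trans)
  qed
next
  assume "(x, a) \<in> E\<^sup>*"
  then show "(sccof n E x, sccof n E a) \<in> scc_order n E"
    unfolding scc_order_def sccs_eq using assms sccof_self by blast
qed

lemma order_sccs: "partial_order_on (sccs n E) (scc_order n E)"
  unfolding partial_order_on_def preorder_on_def
proof (intro conjI)
  show "scc_order n E \<subseteq> sccs n E \<times> sccs n E" unfolding scc_order_def by auto
  show "refl_on (sccs n E) (scc_order n E)" unfolding refl_on_def scc_order_def by auto
  show "trans (scc_order n E)"
  proof (rule transI)
    fix C1 C2 C3 assume h: "(C1, C2) \<in> scc_order n E" "(C2, C3) \<in> scc_order n E"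
    obtain x y z where xyz: "x \<in> {1..n}" "y \<in> {1..n}" "z \<in> {1..n}" "C1 = sccof n E x" "C2 = sccof n E y" "C3 = sccof n E z"
      using h unfolding scc_order_def sccs_eq by blast
    have "(x, y) \<in> E\<^sup>*" using h(1) scc_order_iff[OF xyz(1,2)] xyz(4,5) by simp
    moreover have "(y, z) \<in> E\<^sup>*" using h(2) scc_order_iff[OF xyz(2,3)] xyz(5,6) by simp
    ultimately have "(x, z) \<in> E\<^sup>*" by (rule rtrancl_trans)
    then show "(C1, C3) \<in> scc_order n E" using scc_order_iff[OF xyz(1,3)] xyz(4,6) by simp
  qed
  show "antisym (scc_order n E)"
  proof (rule antisymI)
    fix C1 C2 assume h: "(C1, C2) \<in> scc_order n E" "(C2, C1) \<in> scc_order n E"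
    obtain x y where xy: "x \<in> {1..n}" "y \<in> {1..n}" "C1 = sccof n E x" "C2 = sccof n E y"
      using h unfolding scc_order_def sccs_eq by blast
    have "(x, y) \<in> E\<^sup>*" "(y, x) \<in> E\<^sup>*"
      using h scc_order_iff[OF xy(1,2)] scc_order_iff[OF xy(2,1)] xy(3,4) by simp_all
    then have "y \<in> sccof n E x" using xy unfolding sccof_def by simp
    then show "C1 = C2" using sccof_eq[of y n E x] xy by simp
  qed
qed

lemma assoc_POP: "assoc_pop n E \<in> POP n"
  unfolding assoc_pop_def POP_def using partition_sccs order_sccs by simp

definition PA :: "nat \<Rightarrow> (nat \<times> nat) set \<Rightarrow> (nat \<times> nat) set" where
  "PA n E = {(a, b). a \<in> {1..n} \<and> b \<in> {1..n} \<and> a \<noteq> b \<and> p_adjacent E a b}"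

lemma PA_sub_E1:
  assumes nl: "\<forall>a. (a, a) \<notin> E"
  shows "PA n E \<subseteq> E1 n E s"
proof
  fix p assume "p \<in> PA n E"
  then obtain a b where p: "p = (a, b)" "a \<in> {1..n}" "b \<in> {1..n}" "a \<noteq> b" "p_adjacent E a b"
    unfolding PA_def by blast
  obtain P \<pi> where s: "s = (P, \<pi>)" by (cases s)
  have "\<not> d_separated E a b (\<Union>{C \<in> P. (C, blk P a) \<in> \<pi> \<or> (C, blk P b) \<in> \<pi>} - {a, b})"
    by (rule padj_dconn[OF p(5) _ _ nl]) auto
  then show "p \<in> E1 n E s" unfolding E1_def s p(1) using p by simp
qed

lemma Zassoc:
  assumes "a \<in> {1..n}" "b \<in> {1..n}"
  shows "v \<in> \<Union>{C \<in> sccs n E. (C, blk (sccs n E) a) \<in> scc_order n E \<or> (C, blk (sccs n E) b) \<in> scc_order n E} - {a, b}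
     \<longleftrightarrow> v \<in> {1..n} \<and> v \<noteq> a \<and> v \<noteq> b \<and> (ancestor E v a \<or> ancestor E v b)"
proof -
  have "v \<in> \<Union>{C \<in> sccs n E. (C, sccof n E a) \<in> scc_order n E \<or> (C, sccof n E b) \<in> scc_order n E}
     \<longleftrightarrow> v \<in> {1..n} \<and> ((v, a) \<in> E\<^sup>* \<or> (v, b) \<in> E\<^sup>*)"
  proof
    assume "v \<in> \<Union>{C \<in> sccs n E. (C, sccof n E a) \<in> scc_order n E \<or> (C, sccof n E b) \<in> scc_order n E}"
    then obtain C where C: "C \<in> sccs n E" "v \<in> C" "(C, sccof n E a) \<in> scc_order n E \<or> (C, sccof n E b) \<in> scc_order n E"
      by blast
    then have Cv: "C = sccof n E v" "v \<in> {1..n}" using sccs_mem by blast+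
    then show "v \<in> {1..n} \<and> ((v, a) \<in> E\<^sup>* \<or> (v, b) \<in> E\<^sup>*)"
      using C(3) scc_order_iff[OF Cv(2) assms(1)] scc_order_iff[OF Cv(2) assms(2)] by simp
  next
    assume h: "v \<in> {1..n} \<and> ((v, a) \<in> E\<^sup>* \<or> (v, b) \<in> E\<^sup>*)"
    then have "(sccof n E v, sccof n E a) \<in> scc_order n E \<or> (sccof n E v, sccof n E b) \<in> scc_order n E"
      using scc_order_iff[OF _ assms(1), of v] scc_order_iff[OF _ assms(2), of v] by simp
    moreover have "sccof n E v \<in> sccs n E" "v \<in> sccof n E v" using h sccs_eq sccof_self by auto
    ultimately show "v \<in> \<Union>{C \<in> sccs n E. (C, sccof n E a) \<in> scc_order n E \<or> (C, sccof n E b) \<in> scc_order n E}"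
      by blast
  qed
  then show ?thesis unfolding blk_sccs[OF assms(1)] blk_sccs[OF assms(2)] ancestor_def by blast
qed

lemma E1_assoc:
  assumes nl: "\<forall>a. (a, a) \<notin> E" and Esub: "E \<subseteq> {1..n} \<times> {1..n}"
  shows "E1 n E (assoc_pop n E) = PA n E"
proof
  show "PA n E \<subseteq> E1 n E (assoc_pop n E)" by (rule PA_sub_E1[OF nl])
next
  show "E1 n E (assoc_pop n E) \<subseteq> PA n E"
  proof
    fix p assume "p \<in> E1 n E (assoc_pop n E)"
    then obtain a b where p: "p = (a, b)" "a \<in> {1..n}" "b \<in> {1..n}" "a \<noteq> b"
      and nd: "\<not> d_separated E a b (\<Union>{C \<in> sccs n E. (C, blk (sccs n E) a) \<in> scc_order n E \<or> (C, blk (sccs n E) b) \<in> scc_order n E} - {a, b})"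
      unfolding E1_def assoc_pop_def by auto
    define Z where "Z = \<Union>{C \<in> sccs n E. (C, blk (sccs n E) a) \<in> scc_order n E \<or> (C, blk (sccs n E) b) \<in> scc_order n E} - {a, b}"
    have Zi: "v \<in> Z \<longleftrightarrow> v \<in> {1..n} \<and> v \<noteq> a \<and> v \<noteq> b \<and> (ancestor E v a \<or> ancestor E v b)" for v
      unfolding Z_def using Zassoc p by blast
    obtain vs ds where "d_connecting_path E a b Z vs ds" using nd unfolding d_separated_def Z_def by blast
    then have "p_adjacent E a b" by (rule path_sep_padj) (use Zi Esub in auto)
    then show "p \<in> PA n E" unfolding PA_def using p by simp
  qed
qed

lemma E2_assoc:
  assumes nl: "\<forall>a. (a, a) \<notin> E" and Esub: "E \<subseteq> {1..n} \<times> {1..n}"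
  shows "E2 n E (assoc_pop n E) = unshielded_conductors n E"
proof -
  have bo: "(blk (sccs n E) x, blk (sccs n E) y) \<in> scc_order n E \<longleftrightarrow> ancestor E x y"
    if "x \<in> {1..n}" "y \<in> {1..n}" for x y
    using blk_sccs[OF that(1)] blk_sccs[OF that(2)] scc_order_iff[OF that] unfolding ancestor_def by simp
  show ?thesis
  proof (rule set_eqI)
    fix t :: "nat \<times> nat \<times> nat"
    obtain a b c where t: "t = (a, b, c)" by (cases t)
    have e2c: "(a, b, c) \<in> E2 n E (assoc_pop n E) \<longleftrightarrow> a \<in> {1..n} \<and> b \<in> {1..n} \<and> c \<in> {1..n} \<and> distinct [a, b, c] \<and>
       p_adjacent E a b \<and> p_adjacent E c b \<and> \<not> p_adjacent E a c \<and> (ancestor E b a \<or> ancestor E b c)"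
    proof -
      have e2c0: "(a, b, c) \<in> E2 n E (assoc_pop n E) \<longleftrightarrow> a \<in> {1..n} \<and> b \<in> {1..n} \<and> c \<in> {1..n} \<and> distinct [a, b, c] \<and>
       (a, b) \<in> PA n E \<and> (c, b) \<in> PA n E \<and> (a, c) \<notin> PA n E \<and>
       ((blk (sccs n E) b, blk (sccs n E) a) \<in> scc_order n E \<or> (blk (sccs n E) b, blk (sccs n E) c) \<in> scc_order n E)"
        using E1_assoc[OF assms, unfolded assoc_pop_def] unfolding E2_def assoc_pop_def by simp
      have pa: "\<And>x y. (x, y) \<in> PA n E \<longleftrightarrow> x \<in> {1..n} \<and> y \<in> {1..n} \<and> x \<noteq> y \<and> p_adjacent E x y"
        by (simp add: PA_def)
      show ?thesis
      proof (cases "a \<in> {1..n} \<and> b \<in> {1..n} \<and> c \<in> {1..n}")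
        case True
        then have hh: "a \<in> {1..n}" "b \<in> {1..n}" "c \<in> {1..n}" by auto
        show ?thesis unfolding e2c0 pa bo[OF hh(2,1)] bo[OF hh(2,3)]
          by (simp only: hh simp_thms distinct.simps list.set insert_iff empty_iff) blast
      next
        case False
        then show ?thesis unfolding e2c0 by blast
      qed
    qed
    have uc: "(a, b, c) \<in> unshielded_conductors n E \<longleftrightarrow> a \<in> {1..n} \<and> b \<in> {1..n} \<and> c \<in> {1..n} \<and> distinct [a, b, c] \<and>
       \<not> p_adjacent E a c \<and> p_adjacent E a b \<and> p_adjacent E c b \<and> (ancestor E b a \<or> ancestor E b c)"
      unfolding unshielded_conductors_def by (simp only: mem_Collect_eq prod.case)
    show "t \<in> E2 n E (assoc_pop n E) \<longleftrightarrow> t \<in> unshielded_conductors n E"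
      unfolding t e2c uc by (intro iffI; elim conjE; intro conjI; assumption)
  qed
qed

lemma UC_sub_E2:
  assumes nl: "\<forall>a. (a, a) \<notin> E" and Esub: "E \<subseteq> {1..n} \<times> {1..n}"
    and sP: "s \<in> POP n" and e1: "E1 n E s = PA n E"
  shows "unshielded_conductors n E \<subseteq> E2 n E s"
proof
  fix t assume tU: "t \<in> unshielded_conductors n E"
  obtain a b c where t: "t = (a, b, c)" by (cases t)
  have uc: "a \<in> {1..n} \<and> b \<in> {1..n} \<and> c \<in> {1..n} \<and> distinct [a, b, c] \<and> \<not> p_adjacent E a c \<and>
    p_adjacent E a b \<and> p_adjacent E c b \<and> (ancestor E b a \<or> ancestor E b c)"
    using tU unfolding t unshielded_conductors_def mem_Collect_eq prod.case by assumption
  then have u: "a \<in> {1..n}" "b \<in> {1..n}" "c \<in> {1..n}" "distinct [a, b, c]" "\<not> p_adjacent E a c"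
    "p_adjacent E a b" "p_adjacent E c b" "ancestor E b a \<or> ancestor E b c" by blast+
  obtain P \<pi> where s: "s = (P, \<pi>)" by (cases s)
  have part: "partition_on {1..n} P" using sP unfolding s POP_def by simp
  have inE1: "(x, y) \<in> E1 n E s \<longleftrightarrow> x \<in> {1..n} \<and> y \<in> {1..n} \<and> x \<noteq> y \<and> p_adjacent E x y" for x y
    unfolding e1 PA_def by simp
  have d: "a \<noteq> b" "a \<noteq> c" "b \<noteq> c" using u(4) by auto
  have blkc: "(blk P b, blk P a) \<in> \<pi> \<or> (blk P b, blk P c) \<in> \<pi>"
  proof (rule ccontr)
    assume nb: "\<not> ((blk P b, blk P a) \<in> \<pi> \<or> (blk P b, blk P c) \<in> \<pi>)"
    define Z where "Z = \<Union>{C \<in> P. (C, blk P a) \<in> \<pi> \<or> (C, blk P c) \<in> \<pi>} - {a, c}"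
    have bZ: "b \<notin> Z"
    proof
      assume "b \<in> Z"
      then obtain C where C: "C \<in> P" "b \<in> C" "(C, blk P a) \<in> \<pi> \<or> (C, blk P c) \<in> \<pi>" unfolding Z_def by blast
      then have "blk P b = C" using blk_unique[OF part] by simp
      then show False using C(3) nb by simp
    qed
    have aZ: "a \<notin> Z" and cZ: "c \<notin> Z" unfolding Z_def by auto
    have "\<exists>vs ds. dwalk E Z vs ds \<and> hd vs = a \<and> last vs = c"
    proof (cases "ancestor E b a")
      case True
      then show ?thesis using conductor_walk[OF u(6) u(7) aZ bZ cZ nl] by blast
    next
      case False
      then have "ancestor E b c" using u(8) by simp
      then obtain vs ds where w: "dwalk E Z vs ds" "hd vs = c" "last vs = a"
        using conductor_walk[OF u(7) u(6) cZ bZ aZ nl] by blast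
      have "dwalk E Z (rev vs) (map Not (rev ds))" by (rule dwalk_rev[OF w(1)])
      moreover have "hd (rev vs) = a" "last (rev vs) = c" using dwalk_rev_ends[OF w(1)] w(2,3) by simp_all
      ultimately show ?thesis by blast
    qed
    then obtain vs ds where w: "dwalk E Z vs ds" "hd vs = a" "last vs = c" by blast
    have "\<not> d_separated E a c Z" unfolding d_separated_def using dwalk_to_path[OF w(1)] w(2,3) d(2) by metis
    then have "(a, c) \<in> E1 n E s" unfolding E1_def s Z_def using u(1,3) d(2) by simp
    then show False using inE1 u(5) by simp
  qed
  have "(a, b) \<in> E1 n E s" "(c, b) \<in> E1 n E s" "(a, c) \<notin> E1 n E s"
    using inE1 u d by auto
  then show "t \<in> E2 n E s" unfolding t E2_def s using u(1-4) blkc s by simp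
qed

lemma fin_E1: "finite (E1 n E s)"
proof -
  have "E1 n E s \<subseteq> {1..n} \<times> {1..n}" unfolding E1_def by (cases s) auto
  then show ?thesis by (rule finite_subset) simp
qed

lemma fin_E2: "finite (E2 n E s)"
proof -
  have "E2 n E s \<subseteq> {1..n} \<times> {1..n} \<times> {1..n}" unfolding E2_def by (cases s) auto
  then show ?thesis by (rule finite_subset) simp
qed

theorem proposition3p9:
  fixes n :: nat and E :: "(nat \<times> nat) set"
  assumes "1 \<le> n"
    and "E \<subseteq> {1..n} \<times> {1..n}"
    and "\<forall>a. (a, a) \<notin> E"
  shows "assoc_pop n E \<in> S2 n E \<and> (\<forall>s \<in> S2 n E. E2 n E s = unshielded_conductors n E)"
proof -
  note Esub = assms(2) and nl = assms(3)
  have e1a: "E1 n E (assoc_pop n E) = PA n E" by (rule E1_assoc[OF nl Esub])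
  have e2a: "E2 n E (assoc_pop n E) = unshielded_conductors n E" by (rule E2_assoc[OF nl Esub])
  have aS1: "assoc_pop n E \<in> S1 n E"
    unfolding S1_def
  proof (intro CollectI conjI ballI)
    show "assoc_pop n E \<in> POP n" by (rule assoc_POP)
    fix t assume "t \<in> POP n"
    show "card (E1 n E (assoc_pop n E)) \<le> card (E1 n E t)"
      using card_mono[OF fin_E1 PA_sub_E1[OF nl]] e1a by simp
  qed
  have S1E: "E1 n E s = PA n E" if "s \<in> S1 n E" for s
  proof -
    have "card (E1 n E s) \<le> card (PA n E)" using that aS1 e1a unfolding S1_def by (metis (no_types, lifting) assoc_POP mem_Collect_eq)
    then show ?thesis using PA_sub_E1[OF nl, of n s] fin_E1[of n E s] by (metis card_seteq)
  qed
  have S1P: "s \<in> POP n" if "s \<in> S1 n E" for s using that unfolding S1_def by simp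
  have UCs: "unshielded_conductors n E \<subseteq> E2 n E s" if "s \<in> S1 n E" for s
    using UC_sub_E2[OF nl Esub S1P[OF that] S1E[OF that]] .
  have aS2: "assoc_pop n E \<in> S2 n E"
    unfolding S2_def
  proof (intro CollectI conjI ballI)
    show "assoc_pop n E \<in> S1 n E" by (rule aS1)
    fix t assume "t \<in> S1 n E"
    show "card (E2 n E (assoc_pop n E)) \<le> card (E2 n E t)"
      using card_mono[OF fin_E2 UCs[OF \<open>t \<in> S1 n E\<close>]] e2a by simp
  qed
  have "E2 n E s = unshielded_conductors n E" if "s \<in> S2 n E" for s
  proof -
    have sS1: "s \<in> S1 n E" using that unfolding S2_def by simp
    have "card (E2 n E s) \<le> card (E2 n E (assoc_pop n E))" using that aS1 unfolding S2_def by simp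
    then have "card (E2 n E s) \<le> card (unshielded_conductors n E)" using e2a by simp
    then show ?thesis using UCs[OF sS1] fin_E2[of n E s] by (metis card_seteq)
  qed
  then show ?thesis using aS2 by blast
qed

end
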